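(* Let $m\ge 1$ and $n\ge m+1$. Regarding $\mathbb{C}^m$ as the affine part of $\mathbb{P}^m$, the inclusion $X_n^m\hookrightarrow Y_n^m$ induces a surjective homomorphism $P_n^m=\pi_1(X_n^m)\to Q_n^m=\pi_1(Y_n^m)$.
   Context: For $m\ge1$, $n\ge m+1$: $X_n^m$ is the space of ordered $n$-tuples $(x_1,\dots,x_n)$ of points of $\mathbb{C}^m$ such that every $m+1$ of the points affinely span all of $\mathbb{C}^m$ (equivalently, every $(m+1)\times(m+1)$ minor of the $(m+1)\times n$ matrix whose $i$-th column is $(1,x_i)^T$ is nonzero). $Y_n^m$ is the space of ordered $n$-tuples of points of $\mathbb{P}^m$ such that every $m+1$ of the points span $\mathbb{P}^m$ projectively. $P_n^m=\pi_1(X_n^m)$ and $Q_n^m=\pi_1(Y_n^m)$. Note $X_n^m\subset Y_n^m$ via $\mathbb{C}^m\subset\mathbb{P}^m$. *)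

theory Defs
  imports "HOL-Analysis.Analysis"
begin

definition cline :: "complex^'k \<Rightarrow> (complex^'k) set" where
  "cline v = {c *s v | c. True}"

definition projsp :: "(complex^'k) set set" where
  "projsp = {cline v | v. v \<noteq> 0}"

text \<open>Quotient topology from C^k minus 0 (an open set, so open there = open).\<close>
definition proj_topology :: "(complex^'k) set topology" where
  "proj_topology = topology (\<lambda>U. U \<subseteq> projsp \<and> open {v. v \<noteq> 0 \<and> cline v \<in> U})"

definition caff_hull :: "(complex^'m)^'n \<Rightarrow> 'n set \<Rightarrow> (complex^'m) set" where
  "caff_hull x S = {y. \<exists>c. sum c S = 1 \<and> y = (\<Sum>i\<in>S. c i *s x$i)}"

text \<open>m = CARD('m), n = CARD('n); C^m = complex^'m, P^m = lines in complex^('m::finite option).\<close>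

definition Xsp :: "((complex^'m::finite)^'n::finite) set" where
  "Xsp = {x. \<forall>S. card S = CARD('m) + 1 \<longrightarrow> caff_hull x S = UNIV}"

definition Ysp :: "('n::finite \<Rightarrow> (complex^('m::finite option)) set) set" where
  "Ysp = {L. (\<forall>i. L i \<in> projsp) \<and>
             (\<forall>S. card S = CARD('m) + 1 \<longrightarrow> vec.span (\<Union>i\<in>S. L i) = UNIV)}"

definition Ytop :: "('n::finite \<Rightarrow> (complex^('m::finite option)) set) topology" where
  "Ytop = subtopology (product_topology (\<lambda>i. proj_topology) UNIV) Ysp"

definition Xtop :: "((complex^'m::finite)^'n::finite) topology" where
  "Xtop = subtopology euclidean Xsp"

text \<open>Standard affine chart C^m -> P^m, x |-> [1 : x].\<close>
definition aff_embed :: "complex^'m \<Rightarrow> complex^('m::finite option)" where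
  "aff_embed v = (\<chi> i. case i of None \<Rightarrow> 1 | Some j \<Rightarrow> v$j)"

definition incl_XY :: "(complex^'m::finite)^'n::finite \<Rightarrow> ('n \<Rightarrow> (complex^('m::finite option)) set)" where
  "incl_XY x = (\<lambda>i. cline (aff_embed (x$i)))"

definition loop_in :: "'a topology \<Rightarrow> 'a \<Rightarrow> (real \<Rightarrow> 'a) \<Rightarrow> bool" where
  "loop_in T a p \<longleftrightarrow> pathin T p \<and> p 0 = a \<and> p 1 = a"

definition homotopic_loops_in :: "'a topology \<Rightarrow> 'a \<Rightarrow> (real \<Rightarrow> 'a) \<Rightarrow> (real \<Rightarrow> 'a) \<Rightarrow> bool" where
  "homotopic_loops_in T a p q \<longleftrightarrow>
     homotopic_with (\<lambda>h. h 0 = a \<and> h 1 = a) (top_of_set {0..1}) T p q"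

text \<open>f_* : pi_1(A,a) -> pi_1(B,f a) is surjective: every loop class at f a contains f o p.\<close>
definition pi1_surjective :: "'a topology \<Rightarrow> 'b topology \<Rightarrow> ('a \<Rightarrow> 'b) \<Rightarrow> 'a \<Rightarrow> bool" where
  "pi1_surjective A B f a \<longleftrightarrow>
     (\<forall>q. loop_in B (f a) q \<longrightarrow> (\<exists>p. loop_in A a p \<and> homotopic_loops_in B (f a) (f \<circ> p) q))"

end

theory Submission
  imports Defs
begin

lemma istop_proj: "istopology (\<lambda>U. U \<subseteq> (projsp::(complex^'k::finite) set set) \<and> open {v. v \<noteq> 0 \<and> cline v \<in> U})"
proof -
  define P where "P = (\<lambda>U. U \<subseteq> (projsp::(complex^'k) set set) \<and> open {v. v \<noteq> 0 \<and> cline v \<in> U})"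
  have a: "{v. v \<noteq> 0 \<and> cline v \<in> S \<inter> T} = {v. v \<noteq> 0 \<and> cline v \<in> S} \<inter> {v. v \<noteq> 0 \<and> cline v \<in> T}" for S T :: "(complex^'k) set set"
    by auto
  have b: "{v. v \<noteq> 0 \<and> cline v \<in> \<Union>K} = (\<Union>U\<in>K. {v. v \<noteq> 0 \<and> cline v \<in> U})" for K :: "(complex^'k) set set set"
    by auto
  have i1: "P (S \<inter> T)" if "P S" "P T" for S T
    using that unfolding P_def a by auto
  have i2: "P (\<Union>K)" if "\<forall>U\<in>K. P U" for K
  proof -
    have "open (\<Union>U\<in>K. {v. v \<noteq> 0 \<and> cline v \<in> U})" using that unfolding P_def by auto
    then show ?thesis using that unfolding P_def b by auto
  qed
  have "istopology P" unfolding istopology_def using i1 i2 by blast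
  then show ?thesis unfolding P_def .
qed

lemma openin_proj: "openin proj_topology U \<longleftrightarrow> U \<subseteq> projsp \<and> open {v. v \<noteq> 0 \<and> cline v \<in> U}"
  unfolding proj_topology_def topology_inverse'[OF istop_proj] by (rule refl)

lemma cline_in_projsp: "v \<noteq> 0 \<Longrightarrow> cline v \<in> projsp"
  unfolding projsp_def by auto

lemma topspace_proj: "topspace (proj_topology :: (complex^'k::finite) set topology) = projsp"
proof -
  have "{v::complex^'k. v \<noteq> 0 \<and> cline v \<in> projsp} = -{0}"
    using cline_in_projsp by auto
  then have "openin proj_topology (projsp :: (complex^'k) set set)"
    unfolding openin_proj by (simp add: open_Compl)
  then have 1: "projsp \<subseteq> topspace (proj_topology :: (complex^'k::finite) set topology)" by (rule openin_subset)
  have "openin proj_topology (topspace (proj_topology :: (complex^'k::finite) set topology))" by (rule openin_topspace)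
  then have 2: "topspace (proj_topology :: (complex^'k::finite) set topology) \<subseteq> projsp" unfolding openin_proj by (rule conjunct1)
  show ?thesis using 1 2 by (rule subset_antisym[rotated])
qed

lemma cline_mem: "v \<in> cline v"
  unfolding cline_def by (auto intro: exI[where x=1])

lemma cline_scale: assumes "c \<noteq> 0" shows "cline (c *s v) = cline v"
proof
  show "cline (c *s v) \<subseteq> cline v"
  proof
    fix w assume "w \<in> cline (c *s v)"
    then obtain d where "w = d *s (c *s v)" unfolding cline_def by blast
    then have "w = (d * c) *s v" by (simp add: vector_smult_assoc)
    then show "w \<in> cline v" unfolding cline_def by blast
  qed
  show "cline v \<subseteq> cline (c *s v)"
  proof
    fix w assume "w \<in> cline v"
    then obtain d where "w = d *s v" unfolding cline_def by blast
    then have "w = (d / c) *s (c *s v)" using assms by (simp add: vector_smult_assoc)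
    then show "w \<in> cline (c *s v)" unfolding cline_def by blast
  qed
qed

lemma mem_cline: "w \<in> cline v \<longleftrightarrow> (\<exists>c. w = c *s v)"
  unfolding cline_def by auto

lemma cline_eq_imp: assumes "cline v = cline w" shows "\<exists>c. w = c *s v"
proof -
  have "w \<in> cline v" using cline_mem[of w] assms by simp
  then show ?thesis unfolding mem_cline .
qed

lemma continuous_map_cline:
  fixes w :: "'a \<Rightarrow> complex^'k"
  assumes "continuous_map X euclidean w" "\<And>x. x \<in> topspace X \<Longrightarrow> w x \<noteq> 0"
  shows "continuous_map X proj_topology (\<lambda>x. cline (w x))"
  unfolding continuous_map_def
proof (intro conjI allI impI)
  show "(\<lambda>x. cline (w x)) \<in> topspace X \<rightarrow> topspace proj_topology"
    using assms(2) cline_in_projsp by (auto simp: topspace_proj)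
  fix U :: "(complex^'k) set set" assume "openin proj_topology U"
  then have o: "open {v. v \<noteq> 0 \<and> cline v \<in> U}" by (simp add: openin_proj)
  have eq: "{x \<in> topspace X. cline (w x) \<in> U} = {x \<in> topspace X. w x \<in> {v. v \<noteq> 0 \<and> cline v \<in> U}}"
    using assms(2) by auto
  show "openin X {x \<in> topspace X. cline (w x) \<in> U}"
    unfolding eq by (rule openin_continuous_map_preimage[OF assms(1)]) (simp add: o)
qed

definition Vk :: "'k \<Rightarrow> (complex^'k) set set" where
  "Vk k = {cline v | v. v $ k \<noteq> 0}"

definition sig :: "'k \<Rightarrow> (complex^'k) set \<Rightarrow> complex^'k" where
  "sig k L = (SOME w. w \<in> L \<and> w $ k = 1)"

lemma t1: "(1 / v$k) *s v \<in> cline v" unfolding mem_cline by blast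
lemma t2: "v $ k \<noteq> 0 \<Longrightarrow> ((1 / v$k) *s v) $ k = (1::complex)" by simp
lemma t3: "w = c *s v \<Longrightarrow> w $ k = 1 \<Longrightarrow> c * v$k = (1::complex)"  by simp
lemma t4: "c * v$k = (1::complex) \<Longrightarrow> v$k \<noteq> 0 \<Longrightarrow> c = 1 / v$k" by (simp add: eq_divide_eq)
lemma t5: "w \<in> cline v \<and> w $ k = 1 \<Longrightarrow> \<exists>c. w = c *s v" using mem_cline by blast

lemma sig_cline: assumes "v $ k \<noteq> 0" shows "sig k (cline v) = (1 / v$k) *s v"
  unfolding sig_def
proof (rule some_equality)
  show "(1 / v$k) *s v \<in> cline v \<and> ((1 / v$k) *s v) $ k = 1" using t1 t2[OF assms] by blast
  fix w assume a: "w \<in> cline v \<and> w $ k = 1"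
  obtain c where c: "w = c *s v" using t5[OF a] by blast
  have "c = 1 / v$k" using t4[OF t3[OF c] assms] a by blast
  then show "w = (1 / v$k) *s v" using c by blast
qed

lemma Vk_cline: assumes "v \<noteq> 0" shows "cline v \<in> Vk k \<longleftrightarrow> v $ k \<noteq> 0"
proof
  assume "cline v \<in> Vk k"
  then obtain w where w: "cline v = cline w" "w $ k \<noteq> 0" unfolding Vk_def by blast
  then have "w \<in> cline v" using cline_mem[of w] by simp
  then obtain c where "w = c *s v" unfolding cline_def by blast
  then show "v $ k \<noteq> 0" using w(2) by auto
next
  assume "v $ k \<noteq> 0" then show "cline v \<in> Vk k" unfolding Vk_def by blast
qed

lemma Vk_projsp: "Vk k \<subseteq> projsp"
proof
  fix L assume "L \<in> Vk k"
  then obtain v where v: "L = cline v" "v $ k \<noteq> 0" unfolding Vk_def by blast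
  then have "v \<noteq> 0" by auto
  then show "L \<in> projsp" using v cline_in_projsp by simp
qed

lemma projspE: "L \<in> projsp \<Longrightarrow> (\<And>v. v \<noteq> 0 \<Longrightarrow> L = cline v \<Longrightarrow> P) \<Longrightarrow> P"
  unfolding projsp_def by auto

lemma open_vnz: "open {v::complex^'k. v $ k \<noteq> 0}"
  by (rule open_Collect_neq[OF continuous_on_component[OF continuous_on_id] continuous_on_const])

lemma openin_Vk: "openin proj_topology (Vk (k::'k::finite))"
proof -
  have eq: "{v. v \<noteq> 0 \<and> cline v \<in> Vk k} = {v::complex^'k. v $ k \<noteq> 0}"
  proof (rule set_eqI)
    fix v :: "complex^'k"
    show "v \<in> {v. v \<noteq> 0 \<and> cline v \<in> Vk k} \<longleftrightarrow> v \<in> {v. v $ k \<noteq> 0}"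
      using Vk_cline[of v k] by (cases "v = 0") auto
  qed
  show ?thesis unfolding openin_proj eq by (intro conjI Vk_projsp open_vnz)
qed

lemma sig_mem: assumes "L \<in> Vk k" shows "sig k L \<noteq> 0 \<and> L = cline (sig k L) \<and> sig k L \<in> L \<and> sig k L $ k = 1"
proof -
  obtain v where v: "L = cline v" "v $ k \<noteq> 0" using assms unfolding Vk_def by blast
  have s: "sig k L = (1 / v$k) *s v" using v sig_cline by simp
  have c1: "sig k L $ k = 1" unfolding s using v by simp
  then have "sig k L \<noteq> 0" by (metis zero_index zero_neq_one)
  moreover have "cline (sig k L) = L" unfolding s using v by (simp add: cline_scale)
  moreover have "sig k L \<in> L" unfolding v(1) mem_cline using s v(1) by blast
  ultimately show ?thesis using c1 by blast
qed

lemma cont_normalize: "continuous_on {v::complex^'k::finite. v $ k \<noteq> 0} (\<lambda>v. (1 / v$k) *s v)"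
proof -
  have eq: "(\<lambda>v. \<chi> i. (1 / v$k) * v$i) = (\<lambda>v::complex^'k. (1 / v$k) *s v)"
    by (auto simp: vec_eq_iff)
  show ?thesis unfolding eq[symmetric]
    by (intro continuous_on_vec_lambda continuous_on_mult continuous_on_divide continuous_on_const continuous_on_component continuous_on_id) auto
qed

lemma continuous_map_sig: "continuous_map (subtopology proj_topology (Vk (k::'k::finite))) euclidean (sig k)"
  unfolding continuous_map_def
proof (intro conjI allI impI)
  show "sig k \<in> topspace (subtopology proj_topology (Vk k)) \<rightarrow> topspace euclidean" by simp
  fix W :: "(complex^'k) set" assume "openin euclidean W"
  then have oW: "open W" by simp
  have eq: "{v. v \<noteq> 0 \<and> cline v \<in> {L \<in> Vk k. sig k L \<in> W}} = {v. v $ k \<noteq> 0} \<inter> (\<lambda>v. (1 / v$k) *s v) -` W"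
  proof (rule set_eqI)
    fix v :: "complex^'k"
    show "v \<in> {v. v \<noteq> 0 \<and> cline v \<in> {L \<in> Vk k. sig k L \<in> W}} \<longleftrightarrow> v \<in> {v. v $ k \<noteq> 0} \<inter> (\<lambda>v. (1 / v$k) *s v) -` W"
      using Vk_cline[of v k] sig_cline[of v k] by (cases "v = 0") auto
  qed
  have "continuous_on {v::complex^'k. v $ k \<noteq> 0} (\<lambda>v. (1 / v$k) *s v)"
    by (rule cont_normalize)
  then have "open {v. v \<noteq> 0 \<and> cline v \<in> {L \<in> Vk k. sig k L \<in> W}}"
    unfolding eq using continuous_open_preimage[OF _ open_vnz oW] by blast
  then have op: "openin proj_topology {L \<in> Vk k. sig k L \<in> W}"
    unfolding openin_proj using Vk_projsp by auto
  have ts: "topspace (subtopology proj_topology (Vk k)) = Vk k"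
    using Vk_projsp by (auto simp: topspace_proj)
  show "openin (subtopology proj_topology (Vk k)) {x \<in> topspace (subtopology proj_topology (Vk k)). sig k x \<in> W}"
    unfolding ts openin_subtopology using op by blast
qed

definition phi :: "complex^'m::finite \<Rightarrow> complex^('m option) \<Rightarrow> complex" where
  "phi l v = v $ None + (\<Sum>j\<in>UNIV. l $ j * v $ Some j)"

definition gm :: "complex^'m::finite \<Rightarrow> complex^('m option) \<Rightarrow> complex^('m option)" where
  "gm l v = (\<chi> k. case k of None \<Rightarrow> phi l v | Some j \<Rightarrow> v $ Some j)"

lemma gm_None[simp]: "gm l v $ None = phi l v"
  by (simp add: gm_def)

lemma gm_Some[simp]: "gm l v $ Some j = v $ Some j"
  by (simp add: gm_def)

lemma phi_scale: "phi l (c *s v) = c * phi l v"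
  by (simp add: phi_def sum_distrib_left algebra_simps)

lemma phi_add: "phi l (v + w) = phi l v + phi l w"
  by (simp add: phi_def sum.distrib algebra_simps)

lemma gm_eq_iff: "x = y \<longleftrightarrow> (x $ None = y $ None \<and> (\<forall>j. x $ Some j = y $ Some j))"
  for x y :: "complex^('m::finite option)"
  by (metis option.exhaust vec_eq_iff)

lemma gm_scale: "gm l (c *s v) = c *s gm l v"
  by (simp add: gm_eq_iff phi_scale)

lemma gm_add: "gm l (v + w) = gm l v + gm l w"
  by (simp add: gm_eq_iff phi_add)

lemma gm_linear: "Vector_Spaces.linear (*s) (*s) (gm l)"
  unfolding Vector_Spaces.linear_iff by (simp add: gm_add gm_scale vec.vector_space_axioms)

lemma gm_inv: "gm (- l) (gm l v) = v"
  by (simp add: gm_eq_iff phi_def sum_negf algebra_simps)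

lemma gm_zero: "gm 0 v = v"
  by (simp add: gm_eq_iff phi_def)

lemma gm_zero_fun: "gm 0 = id"
  by (rule ext) (simp add: gm_zero)

lemma gm_nz: "v \<noteq> 0 \<Longrightarrow> gm l v \<noteq> 0"
  by (metis gm_inv gm_scale scale_zero_left vector_smult_lzero)

lemma gm_surj: "surj (gm l)"
  by (metis gm_inv minus_minus surjI)

lemma gm_cline: "gm l ` cline v = cline (gm l v)"
proof
  show "gm l ` cline v \<subseteq> cline (gm l v)" unfolding cline_def by (auto simp: gm_scale)
  show "cline (gm l v) \<subseteq> gm l ` cline v"
  proof
    fix y assume "y \<in> cline (gm l v)"
    then obtain c where "y = c *s gm l v" unfolding cline_def by blast
    then have "y = gm l (c *s v)" by (simp add: gm_scale)
    moreover have "c *s v \<in> cline v" unfolding cline_def by blast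
    ultimately show "y \<in> gm l ` cline v" by blast
  qed
qed

lemma gm_projsp: "L \<in> projsp \<Longrightarrow> gm l ` L \<in> projsp"
  by (metis cline_in_projsp gm_cline gm_nz projspE)

lemma gm_Ysp: assumes "L \<in> Ysp" shows "(\<lambda>i. gm l ` L i) \<in> Ysp"
proof -
  have "vec.span (\<Union>i\<in>S. gm l ` L i) = UNIV" if "card S = CARD('b) + 1" for S
  proof -
    have "(\<Union>i\<in>S. gm l ` L i) = gm l ` (\<Union>i\<in>S. L i)" by auto
    then have "vec.span (\<Union>i\<in>S. gm l ` L i) = gm l ` vec.span (\<Union>i\<in>S. L i)"
      using vec.linear_span_image[OF gm_linear] by metis
    also have "\<dots> = UNIV" using assms that gm_surj unfolding Ysp_def by auto
    finally show ?thesis .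
  qed
  moreover have "\<forall>i. gm l ` L i \<in> projsp" using assms gm_projsp unfolding Ysp_def by blast
  ultimately show ?thesis unfolding Ysp_def by blast
qed

lemma phi_affine: "phi (x + z *s (y - x)) v = (1 - z) * phi x v + z * phi y v"
  by (simp add: phi_def algebra_simps sum.distrib sum_distrib_left sum_subtractf)

lemma phi_aff_embed: "phi 0 (aff_embed x) = 1"
  by (simp add: phi_def aff_embed_def)

lemma aff_embed_None[simp]: "aff_embed x $ None = 1"
  by (simp add: aff_embed_def)

lemma aff_embed_Some[simp]: "aff_embed x $ Some j = x $ j"
  by (simp add: aff_embed_def)

lemma aff_embed_nz: "aff_embed x \<noteq> 0"
  by (metis aff_embed_None zero_index zero_neq_one)

lemma span_lines_sub:
  fixes w :: "'n \<Rightarrow> complex^'k::finite"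
  assumes "finite S"
  shows "vec.span (\<Union>i\<in>S. cline (w i)) \<subseteq> {y. \<exists>c. y = (\<Sum>i\<in>S. c i *s w i)}"
proof (rule vec.span_minimal)
  show "(\<Union>i\<in>S. cline (w i)) \<subseteq> {y. \<exists>c. y = (\<Sum>i\<in>S. c i *s w i)}"
  proof
    fix y assume "y \<in> (\<Union>i\<in>S. cline (w i))"
    then obtain i d where i: "i \<in> S" "y = d *s w i" unfolding cline_def by blast
    have "(\<Sum>j\<in>S. (if j = i then d else 0) *s w j) = (\<Sum>j\<in>S. if j = i then d *s w j else 0)"
      by (rule sum.cong) auto
    also have "\<dots> = d *s w i" using i(1) assms by (simp add: sum.delta)
    finally have "y = (\<Sum>j\<in>S. (if j = i then d else 0) *s w j)" using i(2) by simp
    then show "y \<in> {y. \<exists>c. y = (\<Sum>i\<in>S. c i *s w i)}"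
      by (intro CollectI exI[of _ "\<lambda>j. if j = i then d else 0"])
  qed
  show "vec.subspace {y. \<exists>c. y = (\<Sum>i\<in>S. c i *s w i)}"
    unfolding vec.subspace_def
  proof (intro conjI ballI allI)
    have "0 = (\<Sum>i\<in>S. (\<lambda>_. 0::complex) i *s w i)" by simp
    then show "0 \<in> {y. \<exists>c. y = (\<Sum>i\<in>S. c i *s w i)}"
      by (intro CollectI exI[of _ "\<lambda>_. 0"])
  next
    fix x y assume "x \<in> {y. \<exists>c. y = (\<Sum>i\<in>S. c i *s w i)}" "y \<in> {y. \<exists>c. y = (\<Sum>i\<in>S. c i *s w i)}"
    then obtain c d where cd: "x = (\<Sum>i\<in>S. c i *s w i)" "y = (\<Sum>i\<in>S. d i *s w i)" by blast
    have "x + y = (\<Sum>i\<in>S. (c i + d i) *s w i)"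
      unfolding cd by (simp add: sum.distrib[symmetric] vec.scale_left_distrib)
    then show "x + y \<in> {y. \<exists>c. y = (\<Sum>i\<in>S. c i *s w i)}"
      by (intro CollectI exI[of _ "\<lambda>i. c i + d i"])
  next
    fix a x assume "x \<in> {y. \<exists>c. y = (\<Sum>i\<in>S. c i *s w i)}"
    then obtain c where c: "x = (\<Sum>i\<in>S. c i *s w i)" by blast
    have "a *s x = (\<Sum>i\<in>S. (a * c i) *s w i)"
      unfolding c by (simp add: vec.scale_sum_right vector_smult_assoc)
    then show "a *s x \<in> {y. \<exists>c. y = (\<Sum>i\<in>S. c i *s w i)}"
      by (intro CollectI exI[of _ "\<lambda>i. a * c i"])
  qed
qed

lemma Xsp_from_Ysp:
  fixes x :: "(complex^'m::finite)^'n::finite"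
  assumes "(\<lambda>i. cline (aff_embed (x $ i))) \<in> Ysp"
  shows "x \<in> Xsp"
  unfolding Xsp_def
proof (intro CollectI allI impI)
  fix S :: "'n set" assume cS: "card S = CARD('m) + 1"
  have sp: "vec.span (\<Union>i\<in>S. cline (aff_embed (x $ i))) = UNIV"
    using assms cS unfolding Ysp_def by blast
  show "caff_hull x S = UNIV"
  proof -
    have "y \<in> caff_hull x S" for y :: "complex^'m"
    proof -
    have "aff_embed y \<in> vec.span (\<Union>i\<in>S. cline (aff_embed (x $ i)))" using sp by simp
    then have "aff_embed y \<in> {y. \<exists>c. y = (\<Sum>i\<in>S. c i *s aff_embed (x $ i))}"
      using span_lines_sub[of S "\<lambda>i. aff_embed (x $ i)"] finite[of S] by blast
    then obtain c where c: "aff_embed y = (\<Sum>i\<in>S. c i *s aff_embed (x $ i))" by blast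
    have "aff_embed y $ None = (\<Sum>i\<in>S. c i)" unfolding c by simp
    then have s1: "sum c S = 1" by simp
    have yeq: "y = (\<Sum>i\<in>S. c i *s x$i)"
    proof (subst vec_eq_iff, intro allI)
      fix j
      have "aff_embed y $ Some j = (\<Sum>i\<in>S. c i * x $ i $ j)" unfolding c by simp
      then show "y $ j = (\<Sum>i\<in>S. c i *s x$i) $ j" by simp
    qed
    show "y \<in> caff_hull x S" unfolding caff_hull_def mem_Collect_eq
      by (intro exI[of _ c] conjI s1 yeq)
    qed
    then show ?thesis by blast
  qed
qed

lemma cont_proj_local:
  fixes f :: "'a::topological_space \<Rightarrow> (complex^'k::finite) set"
  assumes loc: "\<And>x. x \<in> S \<Longrightarrow> \<exists>W w. openin (top_of_set S) W \<and> x \<in> W \<and> continuous_on W w \<and>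
                   (\<forall>y\<in>W. w y \<noteq> 0 \<and> f y = cline (w y))"
  shows "continuous_map (top_of_set S) proj_topology f"
  unfolding continuous_map_def
proof (intro conjI allI impI)
  show "f \<in> topspace (top_of_set S) \<rightarrow> topspace proj_topology"
  proof
    fix x assume "x \<in> topspace (top_of_set S)"
    then have "x \<in> S" by simp
    then obtain W w where "x \<in> W" "\<forall>y\<in>W. w y \<noteq> 0 \<and> f y = cline (w y)" using loc by blast
    then show "f x \<in> topspace proj_topology" by (simp add: topspace_proj cline_in_projsp)
  qed
  fix U :: "(complex^'k) set set" assume U: "openin proj_topology U"
  then have oO: "open {v. v \<noteq> 0 \<and> cline v \<in> U}" by (simp add: openin_proj)
  show "openin (top_of_set S) {x \<in> topspace (top_of_set S). f x \<in> U}"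
  proof (subst openin_subopen, intro ballI)
    fix x assume "x \<in> {x \<in> topspace (top_of_set S). f x \<in> U}"
    then have x: "x \<in> S" "f x \<in> U" by auto
    obtain W w where W: "openin (top_of_set S) W" "x \<in> W" "continuous_on W w"
      "\<forall>y\<in>W. w y \<noteq> 0 \<and> f y = cline (w y)" using loc[OF x(1)] by blast
    define T where "T = W \<inter> w -` {v. v \<noteq> 0 \<and> cline v \<in> U}"
    have "openin (top_of_set W) T" unfolding T_def by (rule continuous_openin_preimage_gen[OF W(3) oO])
    then have oT: "openin (top_of_set S) T" using W(1) by (rule openin_trans)
    have "x \<in> T" unfolding T_def using W(2,4) x(2) by auto
    moreover have "T \<subseteq> {x \<in> topspace (top_of_set S). f x \<in> U}"
      unfolding T_def using W(4) openin_imp_subset[OF W(1)] by auto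
    ultimately show "\<exists>T. openin (top_of_set S) T \<and> x \<in> T \<and> T \<subseteq> {x \<in> topspace (top_of_set S). f x \<in> U}"
      using oT by blast
  qed
qed

lemma proj_nz_coord: assumes "L \<in> projsp" shows "\<exists>k. L \<in> Vk k"
proof -
  obtain v where v: "v \<noteq> 0" "L = cline v" using assms by (rule projspE)
  then obtain k where "v $ k \<noteq> 0" by (metis vec_eq_iff zero_index)
  then show ?thesis using v Vk_cline by blast
qed

lemma proj_local_lift:
  fixes Q :: "'a::topological_space \<Rightarrow> (complex^'k::finite) set"
  assumes Q: "continuous_map (top_of_set S) proj_topology Q" and x: "x \<in> S"
  shows "\<exists>W k. openin (top_of_set S) W \<and> x \<in> W \<and> continuous_on W (\<lambda>y. sig k (Q y)) \<and> (\<forall>y\<in>W. Q y \<in> Vk k)"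
proof -
  have "Q x \<in> projsp" using Q x unfolding continuous_map_def topspace_proj by auto
  then obtain k where k: "Q x \<in> Vk k" using proj_nz_coord by blast
  define W where "W = {y \<in> topspace (top_of_set S). Q y \<in> Vk k}"
  have oW: "openin (top_of_set S) W" unfolding W_def
    by (rule openin_continuous_map_preimage[OF Q openin_Vk])
  have WS: "W \<subseteq> S" unfolding W_def by auto
  have "continuous_map (top_of_set W) proj_topology Q"
    using continuous_map_from_subtopology[OF Q, of W] WS by (simp add: subtopology_subtopology Int_absorb1)
  then have "continuous_map (top_of_set W) (subtopology proj_topology (Vk k)) Q"
    by (rule continuous_map_into_subtopology) (auto simp: W_def)
  then have "continuous_map (top_of_set W) euclidean (sig k \<circ> Q)"
    using continuous_map_sig by (rule continuous_map_compose)
  then have "continuous_on W (\<lambda>y. sig k (Q y))" by (simp add: o_def)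
  moreover have "x \<in> W" unfolding W_def using x k by simp
  ultimately show ?thesis using oW unfolding W_def by blast
qed

lemma continuous_on_gm:
  fixes a :: "'a::topological_space \<Rightarrow> complex^'m::finite"
  assumes "continuous_on S a" "continuous_on S b"
  shows "continuous_on S (\<lambda>y. gm (a y) (b y))"
proof -
  have c: "continuous_on S (\<lambda>y. gm (a y) (b y) $ k)" for k
  proof (cases k)
    case None
    have "continuous_on S (\<lambda>y. b y $ None + (\<Sum>j\<in>UNIV. a y $ j * b y $ Some j))"
      by (intro continuous_intros assms)
    then show ?thesis using None by (simp add: phi_def)
  next
    case (Some j)
    have "continuous_on S (\<lambda>y. b y $ Some j)"
      by (intro continuous_intros assms)
    then show ?thesis using Some by simp
  qed
  have "continuous_on S (\<lambda>y. \<chi> k. gm (a y) (b y) $ k)"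
    by (rule continuous_on_vec_lambda) (rule c)
  then show ?thesis by simp
qed

lemma cont_proj_gm:
  fixes Q :: "'a::topological_space \<Rightarrow> (complex^('m::finite option)) set"
  assumes Q: "continuous_map (top_of_set S) proj_topology Q" and lam: "continuous_on S lam"
  shows "continuous_map (top_of_set S) proj_topology (\<lambda>y. gm (lam y) ` Q y)"
proof (rule cont_proj_local)
  fix x assume x: "x \<in> S"
  obtain W k where W: "openin (top_of_set S) W" "x \<in> W" "continuous_on W (\<lambda>y. sig k (Q y))"
    "\<forall>y\<in>W. Q y \<in> Vk k" using proj_local_lift[OF Q x] by blast
  have "continuous_on W lam" using lam openin_imp_subset[OF W(1)] by (rule continuous_on_subset)
  then have "continuous_on W (\<lambda>y. gm (lam y) (sig k (Q y)))"
    using W(3) by (rule continuous_on_gm)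
  moreover have "\<forall>y\<in>W. gm (lam y) (sig k (Q y)) \<noteq> 0 \<and> gm (lam y) ` Q y = cline (gm (lam y) (sig k (Q y)))"
  proof
    fix y assume "y \<in> W"
    then have s: "sig k (Q y) \<noteq> 0 \<and> Q y = cline (sig k (Q y))" using W(4) sig_mem by blast
    then have "gm (lam y) ` Q y = cline (gm (lam y) (sig k (Q y)))" by (metis gm_cline)
    then show "gm (lam y) (sig k (Q y)) \<noteq> 0 \<and> gm (lam y) ` Q y = cline (gm (lam y) (sig k (Q y)))"
      using s gm_nz by blast
  qed
  ultimately show "\<exists>W w. openin (top_of_set S) W \<and> x \<in> W \<and> continuous_on W w \<and>
                   (\<forall>y\<in>W. w y \<noteq> 0 \<and> gm (lam y) ` Q y = cline (w y))"
    using W(1,2) by blast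
qed

lemma cont_sig_comp:
  fixes F :: "'a::topological_space \<Rightarrow> (complex^'k::finite) set"
  assumes F: "continuous_map (top_of_set S) proj_topology F" and V: "\<forall>y\<in>S. F y \<in> Vk k"
  shows "continuous_on S (\<lambda>y. sig k (F y))"
proof -
  have "continuous_map (top_of_set S) (subtopology proj_topology (Vk k)) F"
    using F by (rule continuous_map_into_subtopology) (use V in auto)
  then have "continuous_map (top_of_set S) euclidean (sig k \<circ> F)"
    using continuous_map_sig by (rule continuous_map_compose)
  then show ?thesis by (simp add: o_def)
qed

lemma affine_zero_finite:
  fixes a b :: complex
  assumes "a \<noteq> 0 \<or> b \<noteq> 0"
  shows "finite {z. (1 - z) * a + z * b = 0}"
proof (cases "a = b")
  case True
  then have "{z. (1 - z) * a + z * b = 0} = {}" using assms by (auto simp: algebra_simps)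
  then show ?thesis by simp
next
  case False
  have "{z. (1 - z) * a + z * b = 0} \<subseteq> {a / (a - b)}"
  proof
    fix z assume "z \<in> {z. (1 - z) * a + z * b = 0}"
    then have "a = z * (a - b)" by (simp add: algebra_simps)
    then show "z \<in> {a / (a - b)}" using False by (simp add: eq_divide_eq)
  qed
  then show ?thesis by (rule finite_subset) simp
qed

lemma line_bad_finite:
  fixes v :: "'n \<Rightarrow> complex^('m::finite option)"
  assumes "finite I" "\<forall>i\<in>I. phi x (v i) \<noteq> 0 \<or> phi y (v i) \<noteq> 0"
  shows "finite {z. \<exists>i\<in>I. phi (x + z *s (y - x)) (v i) = 0}"
proof -
  have "{z. \<exists>i\<in>I. phi (x + z *s (y - x)) (v i) = 0} = (\<Union>i\<in>I. {z. (1 - z) * phi x (v i) + z * phi y (v i) = 0})"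
    by (simp only: phi_affine) blast
  moreover have "finite (\<Union>i\<in>I. {z. (1 - z) * phi x (v i) + z * phi y (v i) = 0})"
    using assms by (intro finite_UN_I affine_zero_finite) auto
  ultimately show ?thesis by simp
qed

lemma phi_axis: "phi (axis j c) w = w $ None + c * w $ Some j"
proof -
  have "(\<Sum>j'\<in>UNIV. axis j c $ j' * w $ Some j') = (\<Sum>j'\<in>UNIV. if j' = j then c * w $ Some j else 0)"
    by (rule sum.cong) (auto simp: axis_def)
  then show ?thesis by (simp add: phi_def)
qed

lemma exists_phi_nz:
  fixes w :: "complex^('m::finite option)"
  assumes "w \<noteq> 0"
  shows "\<exists>y. phi y w \<noteq> 0"
proof (cases "w $ None = 0")
  case False
  then show ?thesis by (intro exI[of _ 0]) (simp add: phi_def)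
next
  case True
  obtain k where k: "w $ k \<noteq> 0" using assms by (metis vec_eq_iff zero_index)
  then obtain j where j: "k = Some j" using True by (cases k) auto
  have "phi (axis j (1 / w $ Some j)) w = 1" using True k j by (simp add: phi_axis)
  then show ?thesis by (metis one_neq_zero)
qed

lemma fiber_nonempty:
  fixes v :: "'n \<Rightarrow> complex^('m::finite option)"
  assumes "finite I" "\<forall>i\<in>I. v i \<noteq> 0"
  shows "\<exists>l. \<forall>i\<in>I. phi l (v i) \<noteq> 0"
  using assms
proof (induction I rule: finite_induct)
  case empty
  then show ?case by simp
next
  case (insert i0 I)
  obtain x where x: "\<forall>i\<in>I. phi x (v i) \<noteq> 0" using insert by auto
  obtain y where y: "phi y (v i0) \<noteq> 0" using exists_phi_nz insert.prems by auto
  have "finite {z. \<exists>i\<in>insert i0 I. phi (x + z *s (y - x)) (v i) = 0}"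
    using x y insert.hyps(1) by (intro line_bad_finite) auto
  then obtain z where z: "z \<notin> {z. \<exists>i\<in>insert i0 I. phi (x + z *s (y - x)) (v i) = 0}"
    using ex_new_if_finite[OF infinite_UNIV_char_0] by blast
  then show ?case by blast
qed

lemma cont_line: "continuous_on S (\<lambda>z::complex. x + z *s (d::complex^'k::finite))"
proof -
  have eq: "(\<lambda>z::complex. x + z *s d) = (\<lambda>z. \<chi> j. x $ j + z * d $ j)" by (auto simp: vec_eq_iff)
  show ?thesis unfolding eq
    by (intro continuous_on_vec_lambda continuous_intros)
qed

lemma fiber_path_connected:
  fixes v :: "'n::finite \<Rightarrow> complex^('m::finite option)"
  shows "path_connected {l. \<forall>i. phi l (v i) \<noteq> 0}"
  unfolding path_connected_def
proof (intro ballI)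
  fix x y assume x: "x \<in> {l. \<forall>i. phi l (v i) \<noteq> 0}" and y: "y \<in> {l. \<forall>i. phi l (v i) \<noteq> 0}"
  define Z where "Z = {z. \<exists>i\<in>UNIV. phi (x + z *s (y - x)) (v i) = 0}"
  have fZ: "finite Z" unfolding Z_def using x y by (intro line_bad_finite) auto
  have pc: "path_connected (- Z)"
    by (rule path_connected_complement_countable) (auto simp: fZ countable_finite)
  have "0 \<in> - Z" using x unfolding Z_def by auto
  moreover have "1 \<in> - Z" using y unfolding Z_def by auto
  ultimately obtain g where g: "path g" "path_image g \<subseteq> - Z" "pathstart g = 0" "pathfinish g = 1"
    using pc unfolding path_connected_def by blast
  define h where "h = (\<lambda>z. x + z *s (y - x)) \<circ> g"
  have "path h" unfolding h_def by (rule path_continuous_image[OF g(1) cont_line])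
  moreover have "path_image h \<subseteq> {l. \<forall>i. phi l (v i) \<noteq> 0}"
    using g(2) unfolding h_def path_image_compose Z_def by auto
  moreover have "pathstart h = x" "pathfinish h = y"
    using g(3,4) unfolding h_def pathstart_def pathfinish_def by auto
  ultimately show "\<exists>g. path g \<and> path_image g \<subseteq> {l. \<forall>i. phi l (v i) \<noteq> 0} \<and> pathstart g = x \<and> pathfinish g = y"
    by blast
qed

definition good :: "(complex^('m::finite option)) set \<Rightarrow> complex^'m \<Rightarrow> bool" where
  "good L l \<longleftrightarrow> (\<forall>v\<in>L. v \<noteq> 0 \<longrightarrow> phi l v \<noteq> 0)"

lemma good_cline:
  fixes v :: "complex^('m::finite option)"
  assumes "v \<noteq> 0" shows "good (cline v) l \<longleftrightarrow> phi l v \<noteq> 0"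
proof
  assume "good (cline v) l" then show "phi l v \<noteq> 0" using assms cline_mem unfolding good_def by blast
next
  assume a: "phi l v \<noteq> 0"
  show "good (cline v) l" unfolding good_def
  proof (intro ballI impI)
    fix w assume "w \<in> cline v" "w \<noteq> 0"
    then obtain c where c: "w = c *s v" "c \<noteq> 0" unfolding mem_cline by auto
    then show "phi l w \<noteq> 0" using a by (simp add: phi_scale)
  qed
qed

definition rep :: "(complex^'k) set \<Rightarrow> complex^'k" where
  "rep L = (SOME v. v \<noteq> 0 \<and> L = cline v)"

lemma rep: assumes "L \<in> projsp" shows "rep L \<noteq> 0 \<and> L = cline (rep L)"
proof -
  have "\<exists>v. v \<noteq> 0 \<and> L = cline v" using assms unfolding projsp_def by blast
  then show ?thesis unfolding rep_def by (rule someI_ex)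
qed

lemma good_rep:
  fixes L :: "(complex^('m::finite option)) set"
  assumes "L \<in> projsp" shows "good L l \<longleftrightarrow> phi l (rep L) \<noteq> 0"
  using rep[OF assms] good_cline by metis

lemma good_sig:
  fixes L :: "(complex^('m::finite option)) set"
  assumes "L \<in> Vk k" shows "good L l \<longleftrightarrow> phi l (sig k L) \<noteq> 0"
  using sig_mem[OF assms] good_cline by metis

lemma G_open:
  fixes Lf :: "real \<Rightarrow> 'n::finite \<Rightarrow> (complex^('m::finite option)) set"
  assumes P: "\<And>t i. Lf t i \<in> projsp" and C: "\<And>i. continuous_map euclidean proj_topology (\<lambda>t. Lf t i)"
  shows "open {p. \<forall>i. good (Lf (fst p) i) (snd p)}"
proof -
  define A where "A i k = {t. Lf t i \<in> Vk k}" for i k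
  define Ob where "Ob i k = (A i k \<times> UNIV) \<inter> (\<lambda>p. phi (snd p) (sig k (Lf (fst p) i))) -` (-{0})" for i k
  have oA: "open (A i k)" for i k
  proof -
    have "openin euclidean {t \<in> topspace euclidean. Lf t i \<in> Vk k}"
      by (rule openin_continuous_map_preimage[OF C openin_Vk])
    then show ?thesis unfolding A_def by simp
  qed
  have oOb: "open (Ob i k)" for i k
  proof -
    have "continuous_map (top_of_set (A i k)) proj_topology (\<lambda>t. Lf t i)"
      using C by (rule continuous_map_from_subtopology)
    then have cs: "continuous_on (A i k) (\<lambda>t. sig k (Lf t i))"
      by (rule cont_sig_comp) (simp add: A_def)
    have c1: "continuous_on (A i k \<times> UNIV) (\<lambda>p::real \<times> (complex^'m). sig k (Lf (fst p) i))"
      by (rule continuous_on_compose2[OF cs continuous_on_fst[OF continuous_on_id]]) auto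
    have "continuous_on (A i k \<times> UNIV) (\<lambda>p::real \<times> (complex^'m). phi (snd p) (sig k (Lf (fst p) i)))"
      unfolding phi_def by (intro continuous_intros c1)
    moreover have "open (A i k \<times> (UNIV::(complex^'m) set))" by (rule open_Times[OF oA open_UNIV])
    moreover have "open (-{0::complex})" by (rule open_Compl[OF closed_singleton])
    ultimately show ?thesis unfolding Ob_def by (rule continuous_open_preimage)
  qed
  have eq: "{p. \<forall>i. good (Lf (fst p) i) (snd p)} = (\<Inter>i\<in>UNIV. \<Union>k\<in>UNIV. Ob i k)"
  proof (rule set_eqI)
    fix p :: "real \<times> (complex^'m)"
    have "good (Lf (fst p) i) (snd p) \<longleftrightarrow> (\<exists>k. p \<in> Ob i k)" for i
    proof -
      obtain k where k: "Lf (fst p) i \<in> Vk k" using proj_nz_coord[OF P] by blast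
      show ?thesis
      proof
        assume "good (Lf (fst p) i) (snd p)"
        then have "phi (snd p) (sig k (Lf (fst p) i)) \<noteq> 0" using good_sig[OF k] by blast
        moreover have "fst p \<in> A i k" unfolding A_def using k by simp
        ultimately have "p \<in> Ob i k" unfolding Ob_def Int_iff vimage_eq mem_Times_iff by simp
        then show "\<exists>k. p \<in> Ob i k" by blast
      next
        assume "\<exists>k. p \<in> Ob i k"
        then obtain k' where "p \<in> Ob i k'" by blast
        then have "Lf (fst p) i \<in> Vk k'" "phi (snd p) (sig k' (Lf (fst p) i)) \<noteq> 0"
          unfolding Ob_def A_def Int_iff vimage_eq mem_Times_iff by simp_all
        then show "good (Lf (fst p) i) (snd p)" using good_sig by blast
      qed
    qed
    then show "p \<in> {p. \<forall>i. good (Lf (fst p) i) (snd p)} \<longleftrightarrow> p \<in> (\<Inter>i\<in>UNIV. \<Union>k\<in>UNIV. Ob i k)"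
      by auto
  qed
  show ?thesis unfolding eq by (intro open_INT open_UN ballI oOb) simp
qed

lemma G_fiber:
  fixes Lf :: "real \<Rightarrow> 'n::finite \<Rightarrow> (complex^('m::finite option)) set"
  assumes P: "\<And>t i. Lf t i \<in> projsp"
  shows "{l. \<forall>i. good (Lf t i) l} = {l. \<forall>i. phi l (rep (Lf t i)) \<noteq> 0}"
  using good_rep[OF P] by auto

lemma G_path_connected:
  fixes Lf :: "real \<Rightarrow> 'n::finite \<Rightarrow> (complex^('m::finite option)) set"
  assumes P: "\<And>t i. Lf t i \<in> projsp" and C: "\<And>i. continuous_map euclidean proj_topology (\<lambda>t. Lf t i)"
  shows "path_connected {p. \<forall>i. good (Lf (fst p) i) (snd p)}"
proof -
  define G where "G = {p. \<forall>i. good (Lf (fst p) i) (snd p)}"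
  have oG: "open G" unfolding G_def by (rule G_open[OF P C])
  have fib: "G \<inter> fst -` {t} = (\<lambda>l. (t, l)) ` {l. \<forall>i. phi l (rep (Lf t i)) \<noteq> 0}" for t
  proof -
    have "G \<inter> fst -` {t} = (\<lambda>l. (t, l)) ` {l. \<forall>i. good (Lf t i) l}"
      unfolding G_def by force
    moreover have "{l. \<forall>i. good (Lf t i) l} = {l. \<forall>i. phi l (rep (Lf t i)) \<noteq> 0}"
      by (rule G_fiber) (rule P)
    ultimately show ?thesis by simp
  qed
  have ne: "\<exists>l. (t, l) \<in> G" for t
  proof -
    obtain l where "\<forall>i\<in>UNIV. phi l (rep (Lf t i)) \<noteq> 0"
      using fiber_nonempty[of UNIV "\<lambda>i. rep (Lf t i)"] rep[OF P] by auto
    then have "l \<in> {l. \<forall>i. phi l (rep (Lf t i)) \<noteq> 0}" by simp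
    then have "(t, l) \<in> G \<inter> fst -` {t}" unfolding fib by blast
    then show ?thesis by blast
  qed
  have "connected G"
  proof (rule connected_monotone_quotient_preimage[where f=fst and T=UNIV])
    show "connected (UNIV :: real set)" by simp
    show cf: "continuous_on G fst" by (intro continuous_intros)
    show "fst ` G = UNIV" using ne by force
    fix U :: "real set"
    show "openin (top_of_set G) (G \<inter> fst -` U) \<longleftrightarrow> openin (top_of_set UNIV) U"
    proof
      assume "openin (top_of_set G) (G \<inter> fst -` U)"
      then have "open (G \<inter> fst -` U)" using oG by (rule openin_open_trans)
      then have "open (fst ` (G \<inter> fst -` U))" by (rule open_image_fst)
      moreover have "fst ` (G \<inter> fst -` U) = U" using ne by force
      ultimately show "openin (top_of_set UNIV) U" by simp
    next
      assume "openin (top_of_set UNIV) U"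
      then have "open U" by simp
      then show "openin (top_of_set G) (G \<inter> fst -` U)"
        by (rule continuous_openin_preimage_gen[OF cf])
    qed
  next
    fix t :: real
    have "path_connected {l. \<forall>i. phi l (rep (Lf t i)) \<noteq> 0}" by (rule fiber_path_connected)
    then have "connected {l. \<forall>i. phi l (rep (Lf t i)) \<noteq> 0}" by (rule path_connected_imp_connected)
    then have "connected ((\<lambda>l. (t, l)) ` {l. \<forall>i. phi l (rep (Lf t i)) \<noteq> 0})"
      by (rule connected_continuous_image[rotated]) (intro continuous_intros)
    then show "connected (G \<inter> fst -` {t})" unfolding fib .
  qed
  then show ?thesis unfolding G_def[symmetric] using oG connected_open_path_connected by blast
qed

lemma cont_smult:
  fixes a :: "'a::topological_space \<Rightarrow> complex" and b :: "'a \<Rightarrow> complex^'k::finite"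
  assumes "continuous_on S a" "continuous_on S b"
  shows "continuous_on S (\<lambda>x. a x *s b x)"
proof -
  have eq: "(\<lambda>x. a x *s b x) = (\<lambda>x. \<chi> j. a x * b x $ j)" by (auto simp: vec_eq_iff)
  show ?thesis unfolding eq by (intro continuous_on_vec_lambda continuous_intros assms)
qed

definition clamp :: "real \<Rightarrow> real" where "clamp t = max 0 (min 1 t)"

lemma clamp_range: "clamp t \<in> {0..1}" by (simp add: clamp_def)
lemma clamp_id: "t \<in> {0..1} \<Longrightarrow> clamp t = t" by (simp add: clamp_def)
lemma clamp_cont: "continuous_on S clamp" unfolding clamp_def by (intro continuous_intros)

lemma clamp_map: "continuous_map euclidean (top_of_set {0..1}) clamp"
proof -
  have "continuous_map (top_of_set UNIV) (top_of_set {0..1}) clamp"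
    unfolding continuous_map_subtopology_eu using clamp_cont clamp_range by blast
  then show ?thesis by simp
qed

lemma convex_comb_01:
  fixes s a b :: real
  assumes "s \<in> {0..1}" "a \<in> {0..1}" "b \<in> {0..1}"
  shows "(1 - s) * a + s * b \<in> {0..1}"
proof -
  have "0 \<le> (1 - s) * a" "0 \<le> s * b" using assms by auto
  moreover have "(1 - s) * a \<le> 1 - s" using assms by (intro mult_left_le) auto
  moreover have "s * b \<le> s" using assms by (intro mult_left_le) auto
  ultimately show ?thesis by simp
qed

lemma aff_embed_sig:
  assumes "L \<in> Vk None"
  shows "aff_embed (\<chi> j. sig None L $ Some j) = sig None L"
  using sig_mem[OF assms] by (simp add: gm_eq_iff)

lemma cline_aff_embed_sig:
  assumes "L \<in> Vk None"
  shows "cline (aff_embed (\<chi> j. sig None L $ Some j)) = L"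
  using sig_mem[OF assms] aff_embed_sig[OF assms] by simp

lemma sig_None_aff: "sig None (cline (aff_embed w)) = aff_embed w"
  using sig_cline[of "aff_embed w" None] by simp

theorem lemma2p1:
  assumes "CARD('n::finite) \<ge> CARD('m::finite) + 1"
  shows "\<forall>x0 \<in> (Xsp :: ((complex^'m)^'n) set).
           pi1_surjective Xtop Ytop (incl_XY :: (complex^'m)^'n \<Rightarrow> _) x0"
  unfolding pi1_surjective_def
proof (intro ballI allI impI)
  fix x0 :: "(complex^'m)^'n" assume x0: "x0 \<in> Xsp"
  fix q :: "real \<Rightarrow> 'n \<Rightarrow> (complex^('m option)) set"
  assume lp: "loop_in Ytop (incl_XY x0) q"
  define y0 where "y0 = (incl_XY x0 :: 'n \<Rightarrow> (complex^('m option)) set)"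
  have qc: "continuous_map (top_of_set {0..1}) Ytop q" and q0: "q 0 = y0" and q1: "q 1 = y0"
    using lp unfolding loop_in_def pathin_def y0_def by auto
  have qY: "q t \<in> Ysp" if "t \<in> {0..1}" for t
    using qc that unfolding Ytop_def continuous_map_in_subtopology by auto
  have qP: "q t i \<in> projsp" if "t \<in> {0..1}" for t i
    using qY[OF that] unfolding Ysp_def by auto
  have qci: "continuous_map (top_of_set {0..1}) proj_topology (\<lambda>t. q t i)" for i
    using qc unfolding Ytop_def continuous_map_in_subtopology continuous_map_componentwise_UNIV by auto
  have y0i: "y0 i = cline (aff_embed (x0 $ i))" for i unfolding y0_def incl_XY_def by simp
  define Lf where "Lf t i = q (clamp t) i" for t i
  have LP: "Lf t i \<in> projsp" for t i unfolding Lf_def using qP clamp_range by blast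
  have LC: "continuous_map euclidean proj_topology (\<lambda>t. Lf t i)" for i
  proof -
    have "continuous_map euclidean proj_topology ((\<lambda>t. q t i) \<circ> clamp)"
      using clamp_map qci by (rule continuous_map_compose)
    then show ?thesis unfolding Lf_def o_def .
  qed
  define G where "G = {p. \<forall>i. good (Lf (fst p) i) (snd p)}"
  have pcG: "path_connected G" unfolding G_def by (rule G_path_connected[OF LP LC])
  have good0: "good (y0 i) 0" for i
  proof -
    have "phi (0::complex^'m) (aff_embed (x0$i)) \<noteq> 0" by (simp add: phi_aff_embed)
    then show ?thesis unfolding y0i by (rule good_cline[OF aff_embed_nz, THEN iffD2])
  qed
  have "(0, 0) \<in> G" unfolding G_def Lf_def using good0 q0 by (simp add: clamp_def)
  moreover have "(1, 0) \<in> G" unfolding G_def Lf_def using good0 q1 by (simp add: clamp_def)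
  ultimately obtain \<Gamma> where \<Gamma>: "path \<Gamma>" "path_image \<Gamma> \<subseteq> G" "pathstart \<Gamma> = (0, 0)" "pathfinish \<Gamma> = (1, 0)"
    using pcG unfolding path_connected_def by blast
  define \<tau> where "\<tau> u = clamp (fst (\<Gamma> (clamp u)))" for u
  define \<mu> where "\<mu> u = snd (\<Gamma> (clamp u))" for u
  have \<Gamma>G: "\<Gamma> (clamp u) \<in> G" for u using \<Gamma>(2) clamp_range unfolding path_image_def by blast
  have goodu: "good (q (\<tau> u) i) (\<mu> u)" for u i
    using \<Gamma>G[of u] unfolding G_def Lf_def \<tau>_def \<mu>_def by simp
  have \<tau>r: "\<tau> u \<in> {0..1}" for u unfolding \<tau>_def by (rule clamp_range)
  have \<tau>0: "\<tau> 0 = 0" and \<mu>0: "\<mu> 0 = 0" and \<tau>1: "\<tau> 1 = 1" and \<mu>1: "\<mu> 1 = 0"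
    using \<Gamma>(3,4) unfolding \<tau>_def \<mu>_def pathstart_def pathfinish_def by (simp_all add: clamp_def)
  have \<Gamma>c: "continuous_on UNIV (\<lambda>u. \<Gamma> (clamp u))"
    using \<Gamma>(1) unfolding path_def
    by (intro continuous_on_compose2[OF _ clamp_cont]) (auto simp: clamp_def)
  have \<tau>c: "continuous_on UNIV \<tau>" unfolding \<tau>_def
    by (intro continuous_on_compose2[OF clamp_cont] continuous_intros \<Gamma>c) auto
  have \<mu>c: "continuous_on UNIV \<mu>" unfolding \<mu>_def
    by (intro continuous_intros \<Gamma>c)
  have \<tau>map: "continuous_map euclidean (top_of_set {0..1}) \<tau>"
  proof -
    have "continuous_map (top_of_set UNIV) (top_of_set {0..1}) \<tau>"
      unfolding continuous_map_subtopology_eu using \<tau>c \<tau>r by blast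
    then show ?thesis by simp
  qed
  have Qc: "continuous_map euclidean proj_topology (\<lambda>u. q (\<tau> u) i)" for i
  proof -
    have "continuous_map euclidean proj_topology ((\<lambda>t. q t i) \<circ> \<tau>)"
      using \<tau>map qci by (rule continuous_map_compose)
    then show ?thesis unfolding o_def .
  qed
  define F where "F i u = gm (\<mu> u) ` q (\<tau> u) i" for i u
  have FV: "F i u \<in> Vk None" for i u
  proof -
    obtain v where v: "v \<noteq> 0" "q (\<tau> u) i = cline v" using qP[OF \<tau>r] by (rule projspE)
    have "phi (\<mu> u) v \<noteq> 0" using goodu[of u i] good_cline[OF v(1)] v(2) by simp
    then have "gm (\<mu> u) v $ None \<noteq> 0" by simp
    then show ?thesis unfolding F_def v(2) gm_cline using Vk_cline gm_nz[OF v(1)] by blast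
  qed
  define p where "p u = (\<chi> i. \<chi> j. sig None (F i u) $ Some j)" for u
  have inclp: "incl_XY (p u) = (\<lambda>i. F i u)" for u
    unfolding incl_XY_def p_def using cline_aff_embed_sig[OF FV] by simp
  have FY: "(\<lambda>i. F i u) \<in> Ysp" for u unfolding F_def by (rule gm_Ysp[OF qY[OF \<tau>r]])
  have pX: "p u \<in> Xsp" for u
    by (rule Xsp_from_Ysp) (use FY inclp in \<open>simp add: incl_XY_def\<close>)
  have F0: "F i 0 = y0 i" for i unfolding F_def \<tau>0 \<mu>0 q0 gm_zero_fun by simp
  have F1: "F i 1 = y0 i" for i unfolding F_def \<tau>1 \<mu>1 q1 gm_zero_fun by simp
  have p0: "p 0 = x0" unfolding p_def F0 y0i sig_None_aff by (simp add: vec_eq_iff)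
  have p1: "p 1 = x0" unfolding p_def F1 y0i sig_None_aff by (simp add: vec_eq_iff)
  have Fc: "continuous_map euclidean proj_topology (F i)" for i
  proof -
    have "continuous_map (top_of_set UNIV) proj_topology (\<lambda>u. gm (\<mu> u) ` q (\<tau> u) i)"
      by (rule cont_proj_gm) (use Qc[of i] \<mu>c in simp_all)
    then show ?thesis unfolding F_def[abs_def] by simp
  qed
  have sc: "continuous_on UNIV (\<lambda>u. sig None (F i u))" for i
    by (rule cont_sig_comp) (use Fc[of i] FV in simp_all)
  have pc: "continuous_on UNIV p" unfolding p_def
    by (intro continuous_on_vec_lambda continuous_on_component sc)
  have ploop: "loop_in Xtop x0 p"
    unfolding loop_in_def pathin_def Xtop_def
    using pc p0 p1 pX by (auto simp: continuous_map_subtopology_eu intro: continuous_on_subset)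
  define h1 where "h1 x = (\<lambda>i. gm (complex_of_real (1 - fst x) *s \<mu> (snd x)) ` q (\<tau> (snd x)) i)" for x
  have h1c: "continuous_map (prod_topology (top_of_set {0..1}) (top_of_set {0..1})) Ytop h1"
  proof -
    have comp: "continuous_map (top_of_set ({0..1} \<times> {0..1})) proj_topology (\<lambda>x. h1 x i)" for i
    proof -
      have Q: "continuous_map (top_of_set ({0..1::real} \<times> {0..1::real})) proj_topology (\<lambda>x. q (\<tau> (snd x)) i)"
      proof -
        have "continuous_map (top_of_set ({0..1::real} \<times> {0..1::real})) euclidean snd"
          by (simp add: continuous_on_snd continuous_on_id)
        then have "continuous_map (top_of_set ({0..1::real} \<times> {0..1::real})) proj_topology ((\<lambda>u. q (\<tau> u) i) \<circ> snd)"
          using Qc by (rule continuous_map_compose)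
        then show ?thesis by (simp add: o_def)
      qed
      have L: "continuous_on ({0..1::real} \<times> {0..1::real}) (\<lambda>x. complex_of_real (1 - fst x) *s \<mu> (snd x))"
        by (intro cont_smult continuous_intros continuous_on_compose2[OF \<mu>c]) auto
      show ?thesis unfolding h1_def by (rule cont_proj_gm[OF Q L])
    qed
    have "h1 x \<in> Ysp" if "x \<in> {0..1} \<times> {0..1}" for x
      unfolding h1_def by (rule gm_Ysp[OF qY[OF \<tau>r]])
    then show ?thesis unfolding Ytop_def prod_topology_subtopology_eu
      using comp by (auto simp: continuous_map_in_subtopology continuous_map_componentwise_UNIV)
  qed
  have H1: "homotopic_loops_in Ytop (incl_XY x0) (incl_XY \<circ> p) (q \<circ> \<tau>)"
    unfolding homotopic_loops_in_def homotopic_with_def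
  proof (intro exI conjI allI ballI)
    show "continuous_map (prod_topology (top_of_set {0..1}) (top_of_set {0..1})) Ytop h1" by (rule h1c)
    fix u :: real
    show "h1 (0, u) = (incl_XY \<circ> p) u" unfolding h1_def o_def inclp F_def by simp
    show "h1 (1, u) = (q \<circ> \<tau>) u" unfolding h1_def o_def by (simp add: gm_zero_fun)
  next
    fix s :: real assume "s \<in> {0..1}"
    show "h1 (s, 0) = incl_XY x0" unfolding h1_def by (simp add: \<mu>0 \<tau>0 q0 y0_def gm_zero_fun)
    show "h1 (s, 1) = incl_XY x0" unfolding h1_def by (simp add: \<mu>1 \<tau>1 q1 y0_def gm_zero_fun)
  qed
  define h2 where "h2 x = q ((1 - fst x) * \<tau> (snd x) + fst x * snd x)" for x :: "real \<times> real"
  have h2c: "continuous_map (prod_topology (top_of_set {0..1}) (top_of_set {0..1})) Ytop h2"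
  proof -
    have "continuous_map (top_of_set ({0..1::real} \<times> {0..1::real})) (top_of_set {0..1}) (\<lambda>x. (1 - fst x) * \<tau> (snd x) + fst x * snd x)"
      unfolding continuous_map_subtopology_eu
    proof
      show "continuous_on ({0..1} \<times> {0..1}) (\<lambda>x. (1 - fst x) * \<tau> (snd x) + fst x * snd x)"
        by (intro continuous_intros continuous_on_compose2[OF \<tau>c]) auto
      show "(\<lambda>x. (1 - fst x) * \<tau> (snd x) + fst x * snd x) \<in> ({0..1} \<times> {0..1}) \<rightarrow> {0..1}"
        using convex_comb_01 \<tau>r by auto
    qed
    then have "continuous_map (top_of_set ({0..1::real} \<times> {0..1::real})) Ytop (q \<circ> (\<lambda>x. (1 - fst x) * \<tau> (snd x) + fst x * snd x))"
      using qc by (rule continuous_map_compose)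
    then show ?thesis unfolding h2_def prod_topology_subtopology_eu by (simp add: o_def)
  qed
  have H2: "homotopic_loops_in Ytop (incl_XY x0) (q \<circ> \<tau>) q"
    unfolding homotopic_loops_in_def homotopic_with_def
  proof (intro exI conjI allI ballI)
    show "continuous_map (prod_topology (top_of_set {0..1}) (top_of_set {0..1})) Ytop h2" by (rule h2c)
    fix u :: real
    show "h2 (0, u) = (q \<circ> \<tau>) u" unfolding h2_def by simp
    show "h2 (1, u) = q u" unfolding h2_def by simp
  next
    fix s :: real assume "s \<in> {0..1}"
    show "h2 (s, 0) = incl_XY x0" unfolding h2_def using q0 y0_def \<tau>0 by simp
    show "h2 (s, 1) = incl_XY x0" unfolding h2_def using q1 y0_def \<tau>1 by simp
  qed
  have "homotopic_loops_in Ytop (incl_XY x0) (incl_XY \<circ> p) q"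
    using H1 H2 unfolding homotopic_loops_in_def by (rule homotopic_with_trans)
  then show "\<exists>p. loop_in Xtop x0 p \<and> homotopic_loops_in Ytop (incl_XY x0) (incl_XY \<circ> p) q"
    using ploop by blast
qed

end
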